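(* Let $\omega\ge 2$ and let $\Gamma$ be a finite simple graph that is $\omega$-clique regular, with $m$ cliques of order $\omega$ (so $\Gamma$ has $N=m\binom{\omega}{2}$ edges). Let $\mu_1\le\cdots\le\mu_N$ be the eigenvalues of the adjacency matrix of the line graph $L(\Gamma)$. Then every eigenvalue $\lambda$ of the adjacency matrix of $C_\omega(\Gamma)$ satisfies \[\frac{\omega}{\omega-1}\left(\frac{\mu_1}{2}-\omega+2\right)\le\lambda\le\frac{\omega}{\omega-1}\left(\frac{\mu_N}{2}-\omega+2\right).\]
   Context: A graph is $\omega$-clique regular if it has a nonempty edge set and every edge is contained in exactly one clique of order $\omega$. $L(\Gamma)$ is the line graph (vertices = edges of $\Gamma$, adjacent iff sharing an endpoint). The $\omega$-clique graph $C_\omega(\Gamma)$ has as vertices the cliques of order $\omega$ in $\Gamma$, two distinct ones adjacent iff they have nonempty intersection. *)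

theory Defs
  imports Complex_Main
begin

definition simple_graph :: "'a set \<Rightarrow> 'a set set \<Rightarrow> bool" where
  "simple_graph V E \<longleftrightarrow> finite V \<and> (\<forall>e\<in>E. e \<subseteq> V \<and> card e = 2)"

definition is_clique :: "'a set \<Rightarrow> 'a set set \<Rightarrow> nat \<Rightarrow> 'a set \<Rightarrow> bool" where
  "is_clique V E w K \<longleftrightarrow> K \<subseteq> V \<and> card K = w \<and>
     (\<forall>x\<in>K. \<forall>y\<in>K. x \<noteq> y \<longrightarrow> {x, y} \<in> E)"

definition cliques :: "'a set \<Rightarrow> 'a set set \<Rightarrow> nat \<Rightarrow> 'a set set" where
  "cliques V E w = {K. is_clique V E w K}"

definition clique_regular :: "'a set \<Rightarrow> 'a set set \<Rightarrow> nat \<Rightarrow> bool" where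
  "clique_regular V E w \<longleftrightarrow> E \<noteq> {} \<and>
     (\<forall>e\<in>E. \<exists>!K. is_clique V E w K \<and> e \<subseteq> K)"

definition line_adj :: "'a set \<Rightarrow> 'a set \<Rightarrow> bool" where
  "line_adj e f \<longleftrightarrow> e \<noteq> f \<and> e \<inter> f \<noteq> {}"

definition clique_adj :: "'a set \<Rightarrow> 'a set \<Rightarrow> bool" where
  "clique_adj K L \<longleftrightarrow> K \<noteq> L \<and> K \<inter> L \<noteq> {}"

text \<open>lam is an eigenvalue of the adjacency matrix of the graph with (finite) vertex
  set W and adjacency relation A: there is a nonzero vector f indexed by W with
  A f = lam f.  (The adjacency matrix is real symmetric, so all eigenvalues are real
  and have real eigenvectors.)\<close>
definition adj_eigenvalue :: "'v set \<Rightarrow> ('v \<Rightarrow> 'v \<Rightarrow> bool) \<Rightarrow> real \<Rightarrow> bool" where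
  "adj_eigenvalue W A lam \<longleftrightarrow>
     (\<exists>f :: 'v \<Rightarrow> real. (\<exists>v\<in>W. f v \<noteq> 0) \<and>
        (\<forall>v\<in>W. (\<Sum>u\<in>{u\<in>W. A v u}. f u) = lam * f v))"

definition adj_spectrum :: "'v set \<Rightarrow> ('v \<Rightarrow> 'v \<Rightarrow> bool) \<Rightarrow> real set" where
  "adj_spectrum W A = {lam. adj_eigenvalue W A lam}"

end

theory Submission
  imports Defs "HOL-Analysis.Analysis" "Jordan_Normal_Form.Char_Poly"
begin

definition mv :: "('v \<Rightarrow> 'v \<Rightarrow> real) \<Rightarrow> 'v set \<Rightarrow> ('v \<Rightarrow> real) \<Rightarrow> 'v \<Rightarrow> real" where
  "mv a W f v = (\<Sum>u\<in>W. a v u * f u)"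

definition qf :: "('v \<Rightarrow> 'v \<Rightarrow> real) \<Rightarrow> 'v set \<Rightarrow> ('v \<Rightarrow> real) \<Rightarrow> real" where
  "qf a W f = (\<Sum>v\<in>W. f v * mv a W f v)"

definition nsq :: "'v set \<Rightarrow> ('v \<Rightarrow> real) \<Rightarrow> real" where
  "nsq W f = (\<Sum>v\<in>W. (f v)^2)"

lemma fin_eig:
  assumes "finite W"
  shows "finite {lam. \<exists>f. (\<exists>v\<in>W. f v \<noteq> 0) \<and> (\<forall>v\<in>W. mv a W f v = lam * f v)}"
proof -
  define n where "n = card W"
  obtain h where h: "bij_betw h {0..<n} W" using ex_bij_betw_nat_finite[OF assms] n_def by blast
  define M where "M = mat n n (\<lambda>(i,j). a (h i) (h j))"
  have M: "M \<in> carrier_mat n n" unfolding M_def by simp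
  have "char_poly M \<noteq> 0"
    using degree_monic_char_poly[OF M] by (metis coeff_0 zero_neq_one)
  then have fin: "finite {k. poly (char_poly M) k = 0}" by (rule poly_roots_finite)
  show ?thesis
  proof (rule finite_subset[OF _ fin], safe)
    fix lam f v
    assume v: "v \<in> W" "f v \<noteq> 0" and ev: "\<forall>v\<in>W. mv a W f v = lam * f v"
    define x where "x = vec n (\<lambda>i. f (h i))"
    have x: "x \<in> carrier_vec n" unfolding x_def by simp
    obtain i0 where i0: "i0 < n" "h i0 = v" using h v unfolding bij_betw_def by auto
    have "x \<noteq> 0\<^sub>v n"
    proof
      assume "x = 0\<^sub>v n"
      then have "x $ i0 = 0" using i0 by simp
      then show False using i0 v unfolding x_def by simp
    qed
    moreover have "M *\<^sub>v x = lam \<cdot>\<^sub>v x"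
    proof (rule eq_vecI)
      fix i assume i: "i < dim_vec (lam \<cdot>\<^sub>v x)"
      then have i': "i < n" using x by simp
      have "(M *\<^sub>v x) $ i = (\<Sum>j\<in>{0..<n}. a (h i) (h j) * f (h j))"
        using i' unfolding M_def x_def by (simp add: scalar_prod_def)
      also have "\<dots> = (\<Sum>u\<in>W. a (h i) u * f u)"
        using sum.reindex_bij_betw[OF h, of "\<lambda>u. a (h i) u * f u"] by simp
      also have "\<dots> = lam * f (h i)"
        using ev h i' unfolding mv_def bij_betw_def by auto
      finally show "(M *\<^sub>v x) $ i = (lam \<cdot>\<^sub>v x) $ i" using i' unfolding x_def by simp
    qed (use M x in simp)
    ultimately have "eigenvalue M lam"
      unfolding eigenvalue_def eigenvector_def using M x by auto
    then show "poly (char_poly M) lam = 0" using eigenvalue_root_char_poly[OF M] by simp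
  qed
qed

lemma sum_single:
  fixes F :: "'v \<Rightarrow> real"
  assumes "finite W" "v \<in> W" "\<And>x. x \<in> W \<Longrightarrow> x \<noteq> v \<Longrightarrow> F x = 0"
  shows "sum F W = F v"
proof -
  have "sum F W = F v + sum F (W - {v})" using assms by (simp add: sum.remove)
  also have "sum F (W - {v}) = 0" using assms by (intro sum.neutral) auto
  finally show ?thesis by simp
qed

lemma quad_zero:
  fixes c d :: real
  assumes "\<And>t. 2*t*c + t^2*d \<le> 0"
  shows "c = 0"
proof -
  define D where "D = \<bar>d\<bar> + 1"
  define t where "t = c / D"
  have pos: "D > 0" unfolding D_def by simp
  have "2*t*c + t^2*d \<le> 0" by (rule assms)
  then have "D^2 * (2*t*c + t^2*d) \<le> 0"
    by (simp add: mult_nonneg_nonpos)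
  moreover have "D^2 * (2*t*c + t^2*d) = c^2 * (2*D + d)"
    unfolding t_def using pos by (simp add: field_simps power2_eq_square)
  ultimately have "c^2 * (2*D + d) \<le> 0" by simp
  moreover have "2*D + d > 0" unfolding D_def by (cases "d \<ge> 0") (simp_all add: D_def)
  ultimately have "c^2 \<le> 0" by (simp add: mult_le_0_iff)
  then show ?thesis by simp
qed

lemma qf_scale: "qf a W (\<lambda>v. c * g v) = c^2 * qf a W g"
  unfolding qf_def mv_def
  by (simp add: sum_distrib_left power2_eq_square algebra_simps)

lemma nsq_scale: "nsq W (\<lambda>v. c * g v) = c^2 * nsq W g"
  unfolding nsq_def by (simp add: sum_distrib_left power_mult_distrib)

lemma qf_cong: "(\<And>v. v \<in> W \<Longrightarrow> f v = g v) \<Longrightarrow> qf a W f = qf a W g"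
  unfolding qf_def mv_def by (simp cong: sum.cong)

lemma nsq_cong: "(\<And>v. v \<in> W \<Longrightarrow> f v = g v) \<Longrightarrow> nsq W f = nsq W g"
  unfolding nsq_def by (simp cong: sum.cong)

lemma max_eig:
  fixes a :: "'v \<Rightarrow> 'v \<Rightarrow> real"
  assumes fin: "finite W" and ne: "W \<noteq> {}" and sym: "\<And>u v. u \<in> W \<Longrightarrow> v \<in> W \<Longrightarrow> a u v = a v u"
  shows "\<exists>mu f. (\<exists>v\<in>W. f v \<noteq> 0) \<and> (\<forall>v\<in>W. mv a W f v = mu * f v) \<and> (\<forall>g. qf a W g \<le> mu * nsq W g)"
proof -
  define T where "T = (\<lambda>v. if v \<in> W then {-1..1} else {0::real})"
  define S where "S = PiE UNIV T"
  define K where "K = S \<inter> {f \<in> UNIV. nsq W f = 1}"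
  have "compactin (product_topology (\<lambda>_. euclidean) UNIV) S"
    unfolding S_def compactin_PiE T_def by auto
  then have cS: "compact S" by (simp add: euclidean_product_topology)
  have cont_coord: "continuous_on UNIV (\<lambda>f::'v\<Rightarrow>real. f v)" for v by simp
  have cn: "continuous_on UNIV (nsq W)"
    unfolding nsq_def by (intro continuous_intros cont_coord)
  have "closed {f \<in> UNIV. nsq W f = 1}"
    by (rule continuous_closed_preimage_constant[OF cn]) simp
  then have cK: "compact K" unfolding K_def by (rule compact_Int_closed[OF cS])
  obtain v0 where v0: "v0 \<in> W" using ne by blast
  define e0 where "e0 = (\<lambda>v. if v = v0 then 1 else (0::real))"
  have "(\<Sum>v\<in>W. (e0 v)^2) = (\<Sum>v\<in>W. if v = v0 then 1 else 0)"
    by (rule sum.cong) (auto simp: e0_def)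
  then have "nsq W e0 = 1" unfolding nsq_def using v0 fin by simp
  moreover have "e0 \<in> S" unfolding S_def T_def e0_def using v0 by (auto simp: PiE_iff)
  ultimately have "e0 \<in> K" unfolding K_def by simp
  then have Kne: "K \<noteq> {}" by blast
  have cq: "continuous_on K (qf a W)"
    unfolding qf_def mv_def by (intro continuous_intros continuous_on_subset[OF cont_coord]) auto
  obtain f0 where f0K: "f0 \<in> K" and f0max: "\<And>g. g \<in> K \<Longrightarrow> qf a W g \<le> qf a W f0"
    using continuous_attains_sup[OF cK Kne cq] by blast
  define mu where "mu = qf a W f0"
  have nf0: "nsq W f0 = 1" using f0K unfolding K_def by simp
  have bound: "qf a W g \<le> mu * nsq W g" for g
  proof (cases "nsq W g = 0")
    case True
    then have "\<forall>v\<in>W. (g v)^2 = 0" unfolding nsq_def using fin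
      by (subst (asm) sum_nonneg_eq_0_iff) auto
    then have "qf a W g = 0" unfolding qf_def by simp
    then show ?thesis using True by simp
  next
    case False
    have nn: "nsq W g \<ge> 0" unfolding nsq_def by (simp add: sum_nonneg)
    with False have np: "nsq W g > 0" by simp
    define c where "c = 1 / sqrt (nsq W g)"
    have c2: "c^2 * nsq W g = 1" unfolding c_def using np by (simp add: power_divide)
    define h where "h = (\<lambda>v. if v \<in> W then c * g v else 0)"
    have hq: "qf a W h = c^2 * qf a W g"
      using qf_cong[of W h "\<lambda>v. c * g v" a] qf_scale unfolding h_def by simp
    have hn: "nsq W h = 1"
      using nsq_cong[of W h "\<lambda>v. c * g v"] nsq_scale[of W c g] c2 unfolding h_def by simp
    have "h \<in> S" unfolding S_def T_def
    proof (auto simp: PiE_iff)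
      fix v assume v: "v \<in> W"
      have "(h v)^2 \<le> nsq W h"
        unfolding nsq_def using v fin by (intro member_le_sum) auto
      then have "(h v)^2 \<le> 1" using hn by simp
      then have "\<bar>h v\<bar> \<le> 1" by (simp add: abs_square_le_1)
      then show "- 1 \<le> h v" "h v \<le> 1" by auto
    next
      fix v assume "v \<notin> W" then show "h v = 0" unfolding h_def by simp
    qed
    then have "h \<in> K" unfolding K_def using hn by simp
    then have "c^2 * qf a W g \<le> mu" using f0max hq mu_def by metis
    then have "c^2 * qf a W g * nsq W g \<le> mu * nsq W g" using nn by (rule mult_right_mono)
    moreover have "c^2 * qf a W g * nsq W g = qf a W g" using c2 by (simp add: algebra_simps)
    ultimately show ?thesis by simp
  qed
  have eig: "mv a W f0 v = mu * f0 v" if v: "v \<in> W" for v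
  proof -
    define e where "e = (\<lambda>u. if u = v then 1 else (0::real))"
    have ed: "(\<Sum>u\<in>W. a x u * e u) = a x v" for x
    proof -
      have "(\<Sum>u\<in>W. a x u * e u) = (\<Sum>u\<in>W. if u = v then a x v else 0)"
        by (rule sum.cong) (auto simp: e_def)
      then show ?thesis using v fin by simp
    qed
    have mve: "mv a W (\<lambda>u. f0 u + t * e u) x = mv a W f0 x + t * a x v" for t x
    proof -
      have "mv a W (\<lambda>u. f0 u + t * e u) x = mv a W f0 x + t * (\<Sum>u\<in>W. a x u * e u)"
        unfolding mv_def by (simp add: algebra_simps sum.distrib sum_distrib_left)
      then show ?thesis using ed by simp
    qed
    have symsum: "(\<Sum>x\<in>W. f0 x * a x v) = mv a W f0 v"
      unfolding mv_def using sym v by (intro sum.cong) auto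
    have qfe: "qf a W (\<lambda>u. f0 u + t * e u) = qf a W f0 + 2 * t * mv a W f0 v + t^2 * a v v" for t
    proof -
      have "qf a W (\<lambda>u. f0 u + t * e u) = (\<Sum>x\<in>W. (f0 x + t * e x) * (mv a W f0 x + t * a x v))"
        unfolding qf_def mve ..
      also have "\<dots> = (\<Sum>x\<in>W. f0 x * mv a W f0 x) + t * (\<Sum>x\<in>W. f0 x * a x v)
          + (\<Sum>x\<in>W. t * e x * mv a W f0 x) + (\<Sum>x\<in>W. t * e x * (t * a x v))"
        by (simp add: algebra_simps sum.distrib sum_distrib_left)
      also have "(\<Sum>x\<in>W. t * e x * mv a W f0 x) = t * mv a W f0 v"
        by (subst sum_single[OF fin v]) (auto simp: e_def)
      also have "(\<Sum>x\<in>W. t * e x * (t * a x v)) = t^2 * a v v"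
        by (subst sum_single[OF fin v]) (auto simp: e_def power2_eq_square)
      finally show ?thesis unfolding symsum qf_def[symmetric] by simp
    qed
    have nse: "nsq W (\<lambda>u. f0 u + t * e u) = 1 + 2 * t * f0 v + t^2" for t
    proof -
      have "nsq W (\<lambda>u. f0 u + t * e u) = (\<Sum>x\<in>W. (f0 x)^2) + (\<Sum>x\<in>W. 2 * t * e x * f0 x) + (\<Sum>x\<in>W. t^2 * (e x)^2)"
        unfolding nsq_def by (simp add: power2_sum algebra_simps sum.distrib)
      also have "(\<Sum>x\<in>W. 2 * t * e x * f0 x) = 2 * t * f0 v"
        by (subst sum_single[OF fin v]) (auto simp: e_def)
      also have "(\<Sum>x\<in>W. t^2 * (e x)^2) = t^2"
        by (subst sum_single[OF fin v]) (auto simp: e_def)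
      finally show ?thesis using nf0 unfolding nsq_def by simp
    qed
    have "2*t*(mv a W f0 v - mu * f0 v) + t^2*(a v v - mu) \<le> 0" for t
      using bound[of "\<lambda>u. f0 u + t * e u"] unfolding qfe nse mu_def
      by (simp add: algebra_simps)
    then have "mv a W f0 v - mu * f0 v = 0" by (rule quad_zero)
    then show ?thesis by simp
  qed
  have "\<exists>v\<in>W. f0 v \<noteq> 0"
  proof (rule ccontr)
    assume "\<not> ?thesis"
    then have "nsq W f0 = 0" unfolding nsq_def by simp
    then show False using nf0 by simp
  qed
  then show ?thesis using eig bound by (intro exI[of _ mu] exI[of _ f0]) simp
qed

definition adjm :: "('v \<Rightarrow> 'v \<Rightarrow> bool) \<Rightarrow> 'v \<Rightarrow> 'v \<Rightarrow> real" where
  "adjm A v u = (if A v u then 1 else 0)"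

lemma mv_adjm: assumes "finite W" shows "mv (adjm A) W f v = (\<Sum>u\<in>{u\<in>W. A v u}. f u)"
proof -
  have "(\<Sum>u\<in>W. adjm A v u * f u) = (\<Sum>u\<in>W. if A v u then f u else 0)"
    by (rule sum.cong) (auto simp: adjm_def)
  then show ?thesis unfolding mv_def using assms by (simp add: sum.inter_filter)
qed

lemma adj_eig_iff: "finite W \<Longrightarrow> adj_eigenvalue W A lam \<longleftrightarrow>
   (\<exists>f. (\<exists>v\<in>W. f v \<noteq> 0) \<and> (\<forall>v\<in>W. mv (adjm A) W f v = lam * f v))"
  unfolding adj_eigenvalue_def by (simp add: mv_adjm)

lemma spec_bounds:
  assumes fin: "finite W" and ne: "W \<noteq> {}" and sym: "\<And>u v. u \<in> W \<Longrightarrow> v \<in> W \<Longrightarrow> A u v = A v u"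
  shows "Min (adj_spectrum W A) * nsq W g \<le> qf (adjm A) W g \<and>
         qf (adjm A) W g \<le> Max (adj_spectrum W A) * nsq W g"
proof -
  have finS: "finite (adj_spectrum W A)"
    unfolding adj_spectrum_def adj_eig_iff[OF fin] using fin_eig[OF fin] by simp
  have nn: "nsq W g \<ge> 0" unfolding nsq_def by (simp add: sum_nonneg)
  have sym1: "\<And>u v. u \<in> W \<Longrightarrow> v \<in> W \<Longrightarrow> adjm A u v = adjm A v u"
    unfolding adjm_def using sym by simp
  have "\<exists>mu f. (\<exists>v\<in>W. f v \<noteq> 0) \<and> (\<forall>v\<in>W. mv (adjm A) W f v = mu * f v) \<and> (\<forall>g. qf (adjm A) W g \<le> mu * nsq W g)"
    by (rule max_eig[OF fin ne]) (fact sym1)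
  then obtain mu f where
    H: "(\<exists>v\<in>W. f v \<noteq> 0) \<and> (\<forall>v\<in>W. mv (adjm A) W f v = mu * f v) \<and> (\<forall>g. qf (adjm A) W g \<le> mu * nsq W g)"
    by (elim exE)
  have "adj_eigenvalue W A mu" unfolding adj_eig_iff[OF fin]
    by (rule exI[of _ f]) (use H in simp)
  then have mem: "mu \<in> adj_spectrum W A" unfolding adj_spectrum_def by simp
  have b: "qf (adjm A) W g \<le> mu * nsq W g" using H by simp
  have "mu \<le> Max (adj_spectrum W A)" using finS mem by simp
  then have "mu * nsq W g \<le> Max (adj_spectrum W A) * nsq W g" by (rule mult_right_mono[OF _ nn])
  then have up: "qf (adjm A) W g \<le> Max (adj_spectrum W A) * nsq W g"
    using b by linarith
  define a' where "a' = (\<lambda>v u. - adjm A v u)"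
  have sym2: "\<And>u v. u \<in> W \<Longrightarrow> v \<in> W \<Longrightarrow> a' u v = a' v u"
    unfolding a'_def using sym1 by simp
  have mvneg: "mv a' W h v = - mv (adjm A) W h v" for h v
    unfolding mv_def a'_def by (simp add: sum_negf)
  have qfneg: "qf a' W h = - qf (adjm A) W h" for h
    unfolding qf_def mvneg by (simp add: sum_negf)
  have "\<exists>mu f. (\<exists>v\<in>W. f v \<noteq> 0) \<and> (\<forall>v\<in>W. mv a' W f v = mu * f v) \<and> (\<forall>g. qf a' W g \<le> mu * nsq W g)"
    by (rule max_eig[OF fin ne]) (fact sym2)
  then obtain mu' f' where
    H': "(\<exists>v\<in>W. f' v \<noteq> 0) \<and> (\<forall>v\<in>W. mv a' W f' v = mu' * f' v) \<and> (\<forall>g. qf a' W g \<le> mu' * nsq W g)"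
    by (elim exE)
  have "adj_eigenvalue W A (- mu')" unfolding adj_eig_iff[OF fin]
    by (rule exI[of _ f']) (use H' mvneg in \<open>auto simp: minus_equation_iff[of "mv (adjm A) W f' _"]\<close>)
  then have mem': "- mu' \<in> adj_spectrum W A" unfolding adj_spectrum_def by simp
  have b': "qf a' W g \<le> mu' * nsq W g" using H' by simp
  have "Min (adj_spectrum W A) \<le> - mu'" using finS mem' by simp
  then have "Min (adj_spectrum W A) * nsq W g \<le> (- mu') * nsq W g" by (rule mult_right_mono[OF _ nn])
  moreover have "(- mu') * nsq W g \<le> qf (adjm A) W g" using b' qfneg by simp
  ultimately show ?thesis using up by linarith
qed

lemma sum_sq_inc:
  fixes F :: "'b set \<Rightarrow> real"
  assumes finV: "finite V" and finX: "finite X" and sub: "\<And>e. e \<in> X \<Longrightarrow> e \<subseteq> V"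
  shows "(\<Sum>x\<in>V. (\<Sum>e\<in>X. if x \<in> e then F e else 0)^2)
       = (\<Sum>e\<in>X. \<Sum>e'\<in>X. real (card (e \<inter> e')) * F e * F e')"
proof -
  have "(\<Sum>x\<in>V. (\<Sum>e\<in>X. if x \<in> e then F e else 0)^2)
      = (\<Sum>x\<in>V. \<Sum>e\<in>X. \<Sum>e'\<in>X. (if x \<in> e then F e else 0) * (if x \<in> e' then F e' else 0))"
    by (simp add: power2_eq_square sum_product)
  also have "\<dots> = (\<Sum>e\<in>X. \<Sum>x\<in>V. \<Sum>e'\<in>X. (if x \<in> e then F e else 0) * (if x \<in> e' then F e' else 0))"
    by (rule sum.swap)
  also have "\<dots> = (\<Sum>e\<in>X. \<Sum>e'\<in>X. \<Sum>x\<in>V. (if x \<in> e then F e else 0) * (if x \<in> e' then F e' else 0))"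
    by (intro sum.cong refl sum.swap)
  also have "\<dots> = (\<Sum>e\<in>X. \<Sum>e'\<in>X. real (card (e \<inter> e')) * F e * F e')"
  proof (intro sum.cong refl)
    fix e e' assume e: "e \<in> X" and e': "e' \<in> X"
    have "(\<Sum>x\<in>V. (if x \<in> e then F e else 0) * (if x \<in> e' then F e' else 0))
        = (\<Sum>x\<in>V. if x \<in> e \<inter> e' then F e * F e' else 0)"
      by (intro sum.cong refl) auto
    also have "\<dots> = (\<Sum>x\<in>{x\<in>V. x \<in> e \<inter> e'}. F e * F e')"
      by (rule sum.inter_filter[symmetric, OF finV])
    also have "{x\<in>V. x \<in> e \<inter> e'} = e \<inter> e'" using sub[OF e] by auto
    finally show "(\<Sum>x\<in>V. (if x \<in> e then F e else 0) * (if x \<in> e' then F e' else 0))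
        = real (card (e \<inter> e')) * F e * F e'" by simp
  qed
  finally show ?thesis .
qed

lemma two_elems:
  assumes "finite A" "2 \<le> card A"
  obtains x y where "x \<in> A" "y \<in> A" "x \<noteq> y"
proof -
  from assms have "A \<noteq> {}" by auto
  then obtain x where x: "x \<in> A" by blast
  have "card (A - {x}) \<ge> 1" using assms x by (simp add: card_Diff_singleton)
  then have "A - {x} \<noteq> {}" by (metis card.empty not_one_le_zero)
  then obtain y where "y \<in> A - {x}" by blast
  then show ?thesis using that x by auto
qed

theorem theorem7:
  fixes V :: "'a set" and E :: "'a set set" and w :: nat and lam :: real
  assumes "simple_graph V E"
    and "w \<ge> 2"
    and "clique_regular V E w"
    and "adj_eigenvalue (cliques V E w) clique_adj lam"
  shows "real w / (real w - 1) * (Min (adj_spectrum E line_adj) / 2 - real w + 2) \<le> lam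
       \<and> lam \<le> real w / (real w - 1) * (Max (adj_spectrum E line_adj) / 2 - real w + 2)"
proof -
  define C where "C = cliques V E w"
  have finV: "finite V" and Esub: "\<And>e. e \<in> E \<Longrightarrow> e \<subseteq> V" and Ecard: "\<And>e. e \<in> E \<Longrightarrow> card e = 2"
    using assms(1) unfolding simple_graph_def by auto
  have finE: "finite E" using Esub finV by (meson Pow_iff finite_Pow_iff finite_subset subsetI)
  have Ene: "E \<noteq> {}" and uniq: "\<And>e. e \<in> E \<Longrightarrow> \<exists>!K. is_clique V E w K \<and> e \<subseteq> K"
    using assms(3) unfolding clique_regular_def by auto
  have Cmem: "K \<in> C \<longleftrightarrow> is_clique V E w K" for K unfolding C_def cliques_def by simp
  have KV: "K \<subseteq> V" and Kcard: "card K = w" and Kedge: "\<And>x y. x \<in> K \<Longrightarrow> y \<in> K \<Longrightarrow> x \<noteq> y \<Longrightarrow> {x,y} \<in> E"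
    if "K \<in> C" for K using that unfolding Cmem is_clique_def by auto
  have Kfin: "finite K" if "K \<in> C" for K using KV[OF that] finV by (rule finite_subset)
  have finC: "finite C" using KV finV by (meson Pow_iff finite_Pow_iff finite_subset subsetI)
  define Ke where "Ke = (\<lambda>e. THE K. is_clique V E w K \<and> e \<subseteq> K)"
  have Ke: "Ke e \<in> C" "e \<subseteq> Ke e" if "e \<in> E" for e
    using theI'[OF uniq[OF that]] unfolding Ke_def Cmem by auto
  have Ke_uniq: "Ke e = K" if "e \<in> E" "K \<in> C" "e \<subseteq> K" for e K
    using the1_equality[OF uniq[OF that(1)]] that unfolding Ke_def Cmem by auto
  have sub2E: "e \<in> E" if h1: "K \<in> C" and h2: "e \<subseteq> K" and h3: "card e = 2" for K e
  proof -
    obtain x y where "e = {x,y}" "x \<noteq> y" using h3 by (auto simp: card_2_iff)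
    then show ?thesis using Kedge[OF h1] h2 by auto
  qed
  have edgesK: "{e\<in>E. Ke e = K} = {e. e \<subseteq> K \<and> card e = 2}" if hK: "K \<in> C" for K
  proof (rule Set.set_eqI, rule iffI)
    fix e assume "e \<in> {e\<in>E. Ke e = K}"
    then have "e \<in> E" "Ke e = K" by auto
    then show "e \<in> {e. e \<subseteq> K \<and> card e = 2}" using Ke(2)[of e] Ecard[of e] by auto
  next
    fix e assume "e \<in> {e. e \<subseteq> K \<and> card e = 2}"
    then have h: "e \<subseteq> K" "card e = 2" by auto
    then have "e \<in> E" using sub2E[OF hK] by simp
    moreover have "Ke e = K" using Ke_uniq[OF \<open>e \<in> E\<close> hK h(1)] .
    ultimately show "e \<in> {e\<in>E. Ke e = K}" by simp
  qed
  have cardEK: "card {e\<in>E. Ke e = K} = w choose 2" if "K \<in> C" for K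
    unfolding edgesK[OF that] n_subsets[OF Kfin[OF that]] Kcard[OF that] ..
  have interKL: "card (K \<inter> L) \<le> 1" if h1: "K \<in> C" and h2: "L \<in> C" and h3: "K \<noteq> L" for K L
  proof (rule ccontr)
    assume "\<not> ?thesis"
    then have "2 \<le> card (K \<inter> L)" by simp
    then obtain x y where xy: "x \<in> K \<inter> L" "y \<in> K \<inter> L" "x \<noteq> y"
      using two_elems[of "K \<inter> L"] Kfin[OF h1] by blast
    then have e: "{x,y} \<in> E" using Kedge[OF h1] by auto
    have "Ke {x,y} = K" using Ke_uniq[OF e h1] xy by auto
    moreover have "Ke {x,y} = L" using Ke_uniq[OF e h2] xy by auto
    ultimately show False using h3 by simp
  qed
  have cardKL: "real (card (K \<inter> L)) = (if K = L then real w else 0) + (if clique_adj K L then 1 else 0)"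
    if "K \<in> C" "L \<in> C" for K L
  proof (cases "K = L")
    case True then show ?thesis using Kcard[OF that(1)] by (simp add: clique_adj_def)
  next
    case False
    have "card (K \<inter> L) \<le> 1" using interKL that False by blast
    moreover have "card (K \<inter> L) = 0 \<longleftrightarrow> K \<inter> L = {}" using Kfin[OF that(1)] by simp
    ultimately show ?thesis using False unfolding clique_adj_def by (cases "card (K \<inter> L)") auto
  qed
  have cardee: "adjm line_adj e e' = real (card (e \<inter> e')) - (if e = e' then 2 else 0)"
    if "e \<in> E" "e' \<in> E" for e e'
  proof (cases "e = e'")
    case True then show ?thesis using Ecard[OF that(1)] by (simp add: adjm_def line_adj_def)
  next
    case False
    have fe: "finite e" using Ecard[OF that(1)] by (intro card_ge_0_finite) simp
    have "card (e \<inter> e') \<noteq> 2"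
    proof
      assume "card (e \<inter> e') = 2"
      then have "e \<inter> e' = e" using card_subset_eq[OF fe, of "e \<inter> e'"] Ecard[OF that(1)] by auto
      moreover have fe': "finite e'" using Ecard[OF that(2)] by (intro card_ge_0_finite) simp
      then have "e \<inter> e' = e'" using card_subset_eq[OF fe', of "e \<inter> e'"] Ecard[OF that(2)] \<open>card (e \<inter> e') = 2\<close> by auto
      ultimately show False using False by simp
    qed
    moreover have "card (e \<inter> e') \<le> 2" using card_mono[OF fe, of "e \<inter> e'"] Ecard[OF that(1)] by auto
    moreover have "card (e \<inter> e') = 0 \<longleftrightarrow> e \<inter> e' = {}" using fe by simp
    ultimately show ?thesis using False unfolding adjm_def line_adj_def
      by (cases "card (e \<inter> e')") auto
  qed
  have through: "card {e\<in>E. Ke e = K \<and> x \<in> e} = (if x \<in> K then w - 1 else 0)" if "K \<in> C" for K x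
  proof -
    have eq: "{e\<in>E. Ke e = K \<and> x \<in> e} = {e. e \<subseteq> K \<and> card e = 2 \<and> x \<in> e}"
      using edgesK[OF that] by blast
    show ?thesis
    proof (cases "x \<in> K")
      case False
      then have h0: "{e. e \<subseteq> K \<and> card e = 2 \<and> x \<in> e} = {}" by auto
      show ?thesis unfolding eq h0 using False by simp
    next
      case True
      have "{e. e \<subseteq> K \<and> card e = 2 \<and> x \<in> e} = (\<lambda>y. {x,y}) ` (K - {x})"
      proof safe
        fix e assume e: "e \<subseteq> K" "card e = 2" "x \<in> e"
        then obtain a b where ab: "e = {a,b}" "a \<noteq> b" by (auto simp: card_2_iff)
        show "e \<in> (\<lambda>y. {x,y}) ` (K - {x})"
        proof (cases "a = x")
          case True then show ?thesis using ab e by (intro image_eqI[of _ _ b]) auto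
        next
          case False then have "b = x" using ab e by auto
          then show ?thesis using ab e by (intro image_eqI[of _ _ a]) auto
        qed
      next
        fix y assume "y \<in> K" "y \<noteq> x"
        then show "card {x,y} = 2" by simp
      qed (use True in auto)
      moreover have "inj_on (\<lambda>y. {x,y}) (K - {x})"
        by (auto simp: inj_on_def doubleton_eq_iff)
      ultimately show ?thesis unfolding eq using True Kcard[OF that] Kfin[OF that]
        by (simp add: card_image card_Diff_singleton)
    qed
  qed
  obtain g where gne: "\<exists>K\<in>C. g K \<noteq> 0"
    and geig: "\<And>K. K \<in> C \<Longrightarrow> (\<Sum>L\<in>{L\<in>C. clique_adj K L}. g L) = lam * g K"
    using assms(4) unfolding adj_eigenvalue_def C_def by blast
  define f where "f = (\<lambda>e. g (Ke e))"
  define S where "S = (\<Sum>K\<in>C. (g K)^2)"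
  define c2 where "c2 = real (w choose 2)"
  have KeC: "Ke ` E \<subseteq> C" using Ke by blast
  have N: "nsq E f = c2 * S"
  proof -
    have "nsq E f = (\<Sum>K\<in>C. \<Sum>e\<in>{e\<in>E. Ke e = K}. (f e)^2)"
      unfolding nsq_def by (rule sum.group[OF finE finC KeC, symmetric])
    also have "\<dots> = (\<Sum>K\<in>C. c2 * (g K)^2)"
    proof (rule sum.cong[OF refl])
      fix K assume K: "K \<in> C"
      have "(\<Sum>e\<in>{e\<in>E. Ke e = K}. (f e)^2) = (\<Sum>e\<in>{e\<in>E. Ke e = K}. (g K)^2)"
        by (rule sum.cong) (auto simp: f_def)
      also have "\<dots> = c2 * (g K)^2" using cardEK[OF K] by (simp add: c2_def)
      finally show "(\<Sum>e\<in>{e\<in>E. Ke e = K}. (f e)^2) = c2 * (g K)^2" .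
    qed
    also have "\<dots> = c2 * S" unfolding S_def by (simp add: sum_distrib_left)
    finally show ?thesis .
  qed
  define R where "R = (\<lambda>x. \<Sum>K\<in>C. if x \<in> K then g K else 0)"
  have P: "(\<Sum>e\<in>E. if x \<in> e then f e else 0) = (real w - 1) * R x" for x
  proof -
    have "(\<Sum>e\<in>E. if x \<in> e then f e else 0) = (\<Sum>K\<in>C. \<Sum>e\<in>{e\<in>E. Ke e = K}. if x \<in> e then f e else 0)"
      by (rule sum.group[OF finE finC KeC, symmetric])
    also have "\<dots> = (\<Sum>K\<in>C. (real w - 1) * (if x \<in> K then g K else 0))"
    proof (rule sum.cong[OF refl])
      fix K assume K: "K \<in> C"
      have "(\<Sum>e\<in>{e\<in>E. Ke e = K}. if x \<in> e then f e else 0) = (\<Sum>e\<in>{e\<in>E. Ke e = K}. if x \<in> e then g K else 0)"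
        by (rule sum.cong) (auto simp: f_def)
      also have "\<dots> = (\<Sum>e\<in>{e\<in>{e\<in>E. Ke e = K}. x \<in> e}. g K)"
        by (rule sum.inter_filter[symmetric]) (use finE in simp)
      also have "{e\<in>{e\<in>E. Ke e = K}. x \<in> e} = {e\<in>E. Ke e = K \<and> x \<in> e}" by auto
      also have "(\<Sum>e\<in>{e\<in>E. Ke e = K \<and> x \<in> e}. g K) = real (if x \<in> K then w - 1 else 0) * g K"
        using through[OF K, of x] by simp
      also have "\<dots> = (real w - 1) * (if x \<in> K then g K else 0)"
        using assms(2) by (simp add: of_nat_diff)
      finally show "(\<Sum>e\<in>{e\<in>E. Ke e = K}. if x \<in> e then f e else 0) = (real w - 1) * (if x \<in> K then g K else 0)" .
    qed
    also have "\<dots> = (real w - 1) * R x" unfolding R_def by (simp add: sum_distrib_left)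
    finally show ?thesis .
  qed
  have RR: "(\<Sum>x\<in>V. (R x)^2) = (real w + lam) * S"
  proof -
    have "(\<Sum>x\<in>V. (R x)^2) = (\<Sum>K\<in>C. \<Sum>L\<in>C. real (card (K \<inter> L)) * g K * g L)"
      unfolding R_def by (rule sum_sq_inc[OF finV finC KV])
    also have "\<dots> = (\<Sum>K\<in>C. (real w + lam) * (g K)^2)"
    proof (rule sum.cong[OF refl])
      fix K assume K: "K \<in> C"
      have "(\<Sum>L\<in>C. real (card (K \<inter> L)) * g K * g L)
          = (\<Sum>L\<in>C. (if K = L then real w * g K * g L else 0) + (if clique_adj K L then g K * g L else 0))"
        by (rule sum.cong[OF refl]) (simp add: cardKL[OF K] distrib_right)
      also have "\<dots> = (\<Sum>L\<in>C. if K = L then real w * g K * g L else 0) + (\<Sum>L\<in>C. if clique_adj K L then g K * g L else 0)"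
        by (rule sum.distrib)
      also have "(\<Sum>L\<in>C. if K = L then real w * g K * g L else 0) = real w * (g K)^2"
        using finC K by (simp add: power2_eq_square)
      also have "(\<Sum>L\<in>C. if clique_adj K L then g K * g L else 0) = (\<Sum>L\<in>{L\<in>C. clique_adj K L}. g K * g L)"
        by (rule sum.inter_filter[symmetric, OF finC])
      also have "\<dots> = g K * (lam * g K)" unfolding sum_distrib_left[symmetric] geig[OF K] ..
      finally show "(\<Sum>L\<in>C. real (card (K \<inter> L)) * g K * g L) = (real w + lam) * (g K)^2"
        by (simp add: power2_eq_square algebra_simps)
    qed
    also have "\<dots> = (real w + lam) * S" unfolding S_def by (simp add: sum_distrib_left)
    finally show ?thesis .
  qed
  have Q: "qf (adjm line_adj) E f = (real w - 1)^2 * (real w + lam) * S - 2 * c2 * S"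
  proof -
    have row: "f e * mv (adjm line_adj) E f e = (\<Sum>e'\<in>E. real (card (e \<inter> e')) * f e * f e') - 2 * (f e)^2"
      if e: "e \<in> E" for e
    proof -
      have "mv (adjm line_adj) E f e = (\<Sum>e'\<in>E. real (card (e \<inter> e')) * f e' - (if e = e' then 2 else 0) * f e')"
        unfolding mv_def by (rule sum.cong[OF refl]) (simp add: cardee[OF e] left_diff_distrib)
      also have "\<dots> = (\<Sum>e'\<in>E. real (card (e \<inter> e')) * f e') - (\<Sum>e'\<in>E. (if e = e' then 2 else 0) * f e')"
        by (rule sum_subtractf)
      also have "(\<Sum>e'\<in>E. (if e = e' then 2 else 0) * f e') = 2 * f e"
        by (subst sum_single[OF finE e]) auto
      finally have M: "mv (adjm line_adj) E f e = (\<Sum>e'\<in>E. real (card (e \<inter> e')) * f e') - 2 * f e" .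
      have "f e * (\<Sum>e'\<in>E. real (card (e \<inter> e')) * f e') = (\<Sum>e'\<in>E. real (card (e \<inter> e')) * f e * f e')"
        unfolding sum_distrib_left by (rule sum.cong[OF refl]) (simp add: algebra_simps)
      then show ?thesis unfolding M by (simp add: right_diff_distrib power2_eq_square algebra_simps)
    qed
    have "qf (adjm line_adj) E f = (\<Sum>e\<in>E. (\<Sum>e'\<in>E. real (card (e \<inter> e')) * f e * f e') - 2 * (f e)^2)"
      unfolding qf_def by (rule sum.cong[OF refl]) (rule row)
    also have "\<dots> = (\<Sum>e\<in>E. \<Sum>e'\<in>E. real (card (e \<inter> e')) * f e * f e') - 2 * nsq E f"
      unfolding nsq_def by (simp add: sum_subtractf sum_distrib_left)
    also have "(\<Sum>e\<in>E. \<Sum>e'\<in>E. real (card (e \<inter> e')) * f e * f e') = (\<Sum>x\<in>V. (\<Sum>e\<in>E. if x \<in> e then f e else 0)^2)"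
      by (rule sum_sq_inc[OF finV finE Esub, symmetric])
    also have "\<dots> = (\<Sum>x\<in>V. (real w - 1)^2 * (R x)^2)" unfolding P by (simp add: power_mult_distrib)
    also have "\<dots> = (real w - 1)^2 * (real w + lam) * S" unfolding sum_distrib_left[symmetric] RR by simp
    finally show ?thesis unfolding N by simp
  qed
  have symL: "\<And>u v. u \<in> E \<Longrightarrow> v \<in> E \<Longrightarrow> line_adj u v = line_adj v u"
    unfolding line_adj_def by auto
  have B: "Min (adj_spectrum E line_adj) * nsq E f \<le> qf (adjm line_adj) E f \<and>
           qf (adjm line_adj) E f \<le> Max (adj_spectrum E line_adj) * nsq E f"
    by (rule spec_bounds[OF finE Ene symL])
  obtain K0 where K0: "K0 \<in> C" "g K0 \<noteq> 0" using gne by blast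
  have "(g K0)^2 \<le> S" unfolding S_def by (rule member_le_sum) (use K0 finC in auto)
  moreover have "(g K0)^2 > 0" using K0 by simp
  ultimately have Spos: "S > 0" by linarith
  have "2 * (w choose 2) = w * (w - 1)"
  proof -
    have "even (w * (w - 1))" by (cases "even w") auto
    then show ?thesis unfolding choose_two by simp
  qed
  then have "real (2 * (w choose 2)) = real (w * (w - 1))" by (rule arg_cong)
  moreover have "real (w * (w - 1)) = real w * (real w - 1)" using assms(2) by (simp add: of_nat_diff)
  ultimately have "2 * c2 = real w * (real w - 1)" unfolding c2_def by simp
  define m where "m = real w - 1"
  define W where "W = real w"
  define Mx where "Mx = Max (adj_spectrum E line_adj)"
  define Mn where "Mn = Min (adj_spectrum E line_adj)"
  have c2m: "c2 = W * m / 2" using \<open>2 * c2 = _\<close> unfolding W_def m_def by simp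
  have mpos: "m > 0" unfolding m_def using assms(2) by simp
  have Wm: "W = m + 1" unfolding W_def m_def by simp
  have QQ: "qf (adjm line_adj) E f = (m * S) * (m * (W + lam) - W)"
    unfolding Q c2m unfolding W_def m_def by (simp add: power2_eq_square field_simps)
  have NN: "nsq E f = (m * S) * (W / 2)" unfolding N c2m by (simp add: algebra_simps)
  have mS: "m * S > 0" using mpos Spos by simp
  have B1: "(m * S) * (m * (W + lam) - W) \<le> Mx * ((m * S) * (W / 2))"
    using B unfolding QQ NN Mx_def by blast
  have B2: "Mn * ((m * S) * (W / 2)) \<le> (m * S) * (m * (W + lam) - W)"
    using B unfolding QQ NN Mn_def by blast
  have e1: "Mx * ((m * S) * (W / 2)) = (m * S) * (Mx * (W / 2))" by (simp add: algebra_simps)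
  have e2: "Mn * ((m * S) * (W / 2)) = (m * S) * (Mn * (W / 2))" by (simp add: algebra_simps)
  have up: "m * (W + lam) - W \<le> Mx * (W / 2)"
    using B1 unfolding e1 mult_le_cancel_left_pos[OF mS] .
  have lo: "Mn * (W / 2) \<le> m * (W + lam) - W"
    using B2 unfolding e2 mult_le_cancel_left_pos[OF mS] .
  have g1: "lam \<le> W / m * (Mx / 2 - W + 2)"
  proof -
    have i1: "(m+1)*(Mx/2 - (m+1) + 2) = Mx*((m+1)/2) - m*m + 1" by (simp add: field_simps)
    have i2: "m*(m+1+lam) - (m+1) = m*m + lam*m - 1" by (simp add: algebra_simps)
    have "lam * m \<le> W * (Mx / 2 - W + 2)" using up unfolding Wm i1 i2 by linarith
    then show ?thesis using mpos by (simp add: pos_le_divide_eq mult.commute)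
  qed
  have g2: "W / m * (Mn / 2 - W + 2) \<le> lam"
  proof -
    have i1: "(m+1)*(Mn/2 - (m+1) + 2) = Mn*((m+1)/2) - m*m + 1" by (simp add: field_simps)
    have i2: "m*(m+1+lam) - (m+1) = m*m + lam*m - 1" by (simp add: algebra_simps)
    have "W * (Mn / 2 - W + 2) \<le> lam * m" using lo unfolding Wm i1 i2 by linarith
    then show ?thesis using mpos by (simp add: pos_divide_le_eq mult.commute)
  qed
  show ?thesis using g1 g2 unfolding W_def m_def Mx_def Mn_def by simp
qed

end
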